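(* Let $q>0$. There is no function $u\in C^{4}(\mathbb{R}^{2})$ with $u>0$ in $\mathbb{R}^{2}$ satisfying $\Delta^{2}u+u^{-q}=0$ in $\mathbb{R}^{2}$.
   Context: $\Delta$ denotes the Laplacian on $\mathbb{R}^{2}$ and $\Delta^{2}=\Delta\Delta$. *)

theory Defs
  imports "HOL-Analysis.Analysis"
begin

definition px :: "(real \<times> real \<Rightarrow> real) \<Rightarrow> real \<times> real \<Rightarrow> real" where
  "px f z = deriv (\<lambda>t. f (t, snd z)) (fst z)"

definition py :: "(real \<times> real \<Rightarrow> real) \<Rightarrow> real \<times> real \<Rightarrow> real" where
  "py f z = deriv (\<lambda>t. f (fst z, t)) (snd z)"

fun Ck :: "nat \<Rightarrow> (real \<times> real \<Rightarrow> real) \<Rightarrow> bool" where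
  "Ck 0 f = continuous_on UNIV f"
| "Ck (Suc k) f = (continuous_on UNIV f \<and>
      (\<forall>z. (\<lambda>t. f (t, snd z)) differentiable (at (fst z)) \<and>
           (\<lambda>t. f (fst z, t)) differentiable (at (snd z))) \<and>
      Ck k (px f) \<and> Ck k (py f))"

definition laplacian :: "(real \<times> real \<Rightarrow> real) \<Rightarrow> real \<times> real \<Rightarrow> real" where
  "laplacian f z = px (px f) z + py (py f) z"

end

theory Submission
  imports Defs
begin

lemma partials_has_derivative:
  fixes f :: "real \<times> real \<Rightarrow> real"
  assumes diff: "\<forall>z. (\<lambda>t. f (t, snd z)) differentiable (at (fst z)) \<and>
           (\<lambda>t. f (fst z, t)) differentiable (at (snd z))"
    and cy: "continuous_on UNIV (py f)"
  shows "(f has_derivative (\<lambda>(h,k). px f z * h + py f z * k)) (at z)"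
proof -
  obtain x y where z: "z = (x,y)" by (cases z)
  have fx: "((\<lambda>x. f (x, y)) has_derivative (\<lambda>h. px f z * h)) (at x within UNIV)"
    using diff[rule_format, of z] unfolding z px_def
    by (simp add: DERIV_deriv_iff_real_differentiable[symmetric] has_field_derivative_def)
  have fy: "((\<lambda>y. f (x, y)) has_derivative blinfun_apply (blinfun_mult_right (py f (x, y)))) (at y within UNIV)"
    for x y
    using diff[rule_format, of "(x,y)"] unfolding py_def
    by (simp add: DERIV_deriv_iff_real_differentiable[symmetric] has_field_derivative_def)
  have cont: "continuous (at (x, y) within UNIV \<times> UNIV) (\<lambda>(x, y). blinfun_mult_right (py f (x, y)))"
  proof -
    have "isCont (py f) (x,y)" using cy by (simp add: continuous_on_eq_continuous_at)
    then have "isCont (\<lambda>p. blinfun_mult_right (py f p)) (x,y)"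
      by (intro continuous_intros) 
    then show ?thesis by (simp add: case_prod_beta')
  qed
  have "((\<lambda>(x, y). f (x, y)) has_derivative (\<lambda>(tx, ty). px f z * tx + blinfun_mult_right (py f (x, y)) ty)) (at (x, y) within UNIV \<times> UNIV)"
    by (rule has_derivative_partialsI[OF fx fy cont]) auto
  then show ?thesis unfolding z by (simp add: mult.commute)
qed

lemma alg:
  fixes c sn p q a b e d r :: real
  assumes "sn^2+c^2=1"
  shows "c * p + sn * q + r * c * (c * a + sn * b) + r * sn * (c * e + sn * d) = r * (a+d) - (-c * p - sn * (-r * sn * a + r * c * b) - sn * q + c * (-r * sn * e + r * c * d))"
proof -
  have "(c * p + sn * q + r * c * (c * a + sn * b) + r * sn * (c * e + sn * d)) - (r * (a+d) - (-c * p - sn * (-r * sn * a + r * c * b) - sn * q + c * (-r * sn * e + r * c * d)))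
     = r * (a+d) * (sn^2+c^2-1)"
    by (simp add: algebra_simps power2_eq_square)
  with assms show ?thesis by simp
qed

definition pol :: "(real \<times> real \<Rightarrow> real) \<Rightarrow> real \<Rightarrow> real \<Rightarrow> real" where
  "pol g r t = g (r * cos t, r * sin t)"

definition Av :: "(real \<times> real \<Rightarrow> real) \<Rightarrow> real \<Rightarrow> real" where
  "Av g r = integral {0..2*pi} (pol g r)"

definition Mv :: "(real \<times> real \<Rightarrow> real) \<Rightarrow> real \<Rightarrow> real" where
  "Mv f r = integral {0..2*pi} (\<lambda>t. cos t * pol (px f) r t + sin t * pol (py f) r t)"

lemma pol_cont: "continuous_on UNIV g \<Longrightarrow> continuous_on UNIV (\<lambda>p. pol g (fst p) (snd p))"
  unfolding pol_def by (rule continuous_on_compose2[of UNIV g]) (auto intro!: continuous_intros)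

lemma pol_cont_t: "continuous_on UNIV g \<Longrightarrow> continuous_on S (pol g r)"
  unfolding pol_def by (rule continuous_on_compose2[of UNIV g]) (auto intro!: continuous_intros)

lemma chain2:
  fixes f :: "real \<times> real \<Rightarrow> real"
  assumes "(f has_derivative (\<lambda>(h,k). a * h + b * k)) (at (\<gamma> s))"
    "(\<gamma> has_derivative (\<lambda>h. (h*c, h*d))) (at s)"
  shows "((\<lambda>s. f (\<gamma> s)) has_real_derivative (a*c + b*d)) (at s)"
proof -
  have "((f \<circ> \<gamma>) has_derivative ((\<lambda>(h,k). a * h + b * k) \<circ> (\<lambda>h. (h*c, h*d)))) (at s)"
    by (rule diff_chain_at[OF assms(2) assms(1)])
  moreover have "((\<lambda>(h,k). a * h + b * k) \<circ> (\<lambda>h. (h*c, h*d))) = (*) (a*c+b*d)"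
    by (auto simp: algebra_simps)
  ultimately show ?thesis by (simp add: has_field_derivative_def o_def)
qed

lemma pol_dr:
  assumes diff: "\<forall>z. (\<lambda>t. f (t, snd z)) differentiable (at (fst z)) \<and>
           (\<lambda>t. f (fst z, t)) differentiable (at (snd z))"
    and cy: "continuous_on UNIV (py f)"
  shows "((\<lambda>r. pol f r t) has_real_derivative (cos t * pol (px f) r t + sin t * pol (py f) r t)) (at r)"
proof -
  have "((\<lambda>r. f ((\<lambda>r. (r * cos t, r * sin t)) r)) has_real_derivative
     (px f (r * cos t, r * sin t) * cos t + py f (r * cos t, r * sin t) * sin t)) (at r)"
    by (rule chain2[OF partials_has_derivative[OF diff cy]])
      (auto intro!: derivative_eq_intros)
  then show ?thesis unfolding pol_def by (simp add: mult.commute)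
qed

lemma pol_dt:
  assumes diff: "\<forall>z. (\<lambda>t. f (t, snd z)) differentiable (at (fst z)) \<and>
           (\<lambda>t. f (fst z, t)) differentiable (at (snd z))"
    and cy: "continuous_on UNIV (py f)"
  shows "((\<lambda>t. pol f r t) has_real_derivative (- r * sin t * pol (px f) r t + r * cos t * pol (py f) r t)) (at t)"
proof -
  have "((\<lambda>t. f ((\<lambda>t. (r * cos t, r * sin t)) t)) has_real_derivative
     (px f (r * cos t, r * sin t) * (- r * sin t) + py f (r * cos t, r * sin t) * (r * cos t))) (at t)"
    by (rule chain2[OF partials_has_derivative[OF diff cy]])
      (auto intro!: derivative_eq_intros simp: algebra_simps)
  then show ?thesis unfolding pol_def by (simp add: algebra_simps)
qed

lemma Av_deriv:
  assumes diff: "\<forall>z. (\<lambda>t. f (t, snd z)) differentiable (at (fst z)) \<and>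
           (\<lambda>t. f (fst z, t)) differentiable (at (snd z))"
    and cf: "continuous_on UNIV f"
    and cx: "continuous_on UNIV (px f)" and cy: "continuous_on UNIV (py f)"
  shows "(Av f has_real_derivative Mv f r) (at r)"
proof -
  have "((\<lambda>r. integral (cbox 0 (2*pi)) (pol f r)) has_field_derivative
     integral (cbox 0 (2*pi)) (\<lambda>t. cos t * pol (px f) r t + sin t * pol (py f) r t)) (at r within UNIV)"
  proof (rule leibniz_rule_field_derivative[where fx="\<lambda>r t. cos t * pol (px f) r t + sin t * pol (py f) r t"])
    show "((\<lambda>r. pol f r t) has_real_derivative cos t * pol (px f) r t + sin t * pol (py f) r t) (at r within UNIV)" for r t
      using pol_dr[OF diff cy] by simp
    show "pol f r integrable_on cbox 0 (2 * pi)" for r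
      by (rule integrable_continuous) (rule pol_cont_t[OF cf])
    have "continuous_on UNIV (\<lambda>p::real\<times>real. cos (snd p) * pol (px f) (fst p) (snd p) + sin (snd p) * pol (py f) (fst p) (snd p))"
      by (intro continuous_intros pol_cont[OF cx, THEN continuous_on_compose2[of UNIV _ UNIV id], simplified]
           pol_cont[OF cy, THEN continuous_on_compose2[of UNIV _ UNIV id], simplified]) 
    then show "continuous_on (UNIV \<times> cbox 0 (2 * pi)) (\<lambda>(r, t). cos t * pol (px f) r t + sin t * pol (py f) r t)"
      unfolding case_prod_beta' using continuous_on_subset subset_UNIV by blast
  qed auto
  then show ?thesis unfolding Av_def Mv_def cbox_interval by simp
qed

lemma rMv_deriv:
  assumes "Ck 2 f"
  shows "((\<lambda>r. r * Mv f r) has_real_derivative r0 * Av (laplacian f) r0) (at r0)"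
proof -
  define P where "P = px f"
  define Q where "Q = py f"
  from assms have cf: "continuous_on UNIV f" and cP: "continuous_on UNIV P" and cQ: "continuous_on UNIV Q"
    and dP: "\<forall>z. (\<lambda>t. P (t, snd z)) differentiable (at (fst z)) \<and> (\<lambda>t. P (fst z, t)) differentiable (at (snd z))"
    and dQ: "\<forall>z. (\<lambda>t. Q (t, snd z)) differentiable (at (fst z)) \<and> (\<lambda>t. Q (fst z, t)) differentiable (at (snd z))"
    and cPx: "continuous_on UNIV (px P)" and cPy: "continuous_on UNIV (py P)"
    and cQx: "continuous_on UNIV (px Q)" and cQy: "continuous_on UNIV (py Q)"
    by (simp_all add: numeral_2_eq_2 P_def Q_def)
  note pc = pol_cont[THEN continuous_on_compose2[of UNIV _ UNIV id], simplified]
  define fx where "fx = (\<lambda>r t. cos t * pol P r t + sin t * pol Q r t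
     + r * cos t * (cos t * pol (px P) r t + sin t * pol (py P) r t)
     + r * sin t * (cos t * pol (px Q) r t + sin t * pol (py Q) r t))"
  define g where "g = (\<lambda>r t. r * cos t * pol P r t + r * sin t * pol Q r t)"
  have gi: "g r integrable_on {0..2*pi}" for r
    unfolding g_def by (intro integrable_continuous_interval continuous_intros pol_cont_t cP cQ)
  have eq1: "r * Mv f r = integral {0..2*pi} (g r)" for r
  proof -
    have "r * Mv f r = integral {0..2*pi} (\<lambda>t. r * (cos t * pol P r t + sin t * pol Q r t))"
      unfolding Mv_def P_def Q_def by simp
    also have "\<dots> = integral {0..2*pi} (g r)"
      unfolding g_def by (simp add: algebra_simps)
    finally show ?thesis .
  qed
  have d1: "((\<lambda>r. integral (cbox 0 (2*pi)) (g r)) has_field_derivative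
     integral (cbox 0 (2*pi)) (fx r0)) (at r0 within UNIV)"
  proof (rule leibniz_rule_field_derivative[where fx=fx])
    show "((\<lambda>r. g r t) has_real_derivative fx r t) (at r within UNIV)" for r t
      unfolding g_def fx_def
      by (auto intro!: derivative_eq_intros pol_dr[OF dP cPy] pol_dr[OF dQ cQy] simp: algebra_simps)
    show "g r integrable_on cbox 0 (2 * pi)" for r
      using gi by (simp add: cbox_interval)
    have "continuous_on UNIV (\<lambda>p::real\<times>real. fx (fst p) (snd p))"
      unfolding fx_def by (intro continuous_intros pc cP cQ cPx cPy cQx cQy) 
    then show "continuous_on (UNIV \<times> cbox 0 (2 * pi)) (\<lambda>(r, t). fx r t)"
      unfolding case_prod_beta' using continuous_on_subset subset_UNIV by blast
  qed auto
  define h where "h = (\<lambda>t. - sin t * pol P r0 t + cos t * pol Q r0 t)"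
  define h' where "h' = (\<lambda>t. - cos t * pol P r0 t - sin t * (- r0 * sin t * pol (px P) r0 t + r0 * cos t * pol (py P) r0 t)
     - sin t * pol Q r0 t + cos t * (- r0 * sin t * pol (px Q) r0 t + r0 * cos t * pol (py Q) r0 t))"
  have hd: "(h has_real_derivative h' t) (at t)" for t
    unfolding h_def h'_def
    by (auto intro!: derivative_eq_intros pol_dt[OF dP cPy] pol_dt[OF dQ cQy] simp: algebra_simps)
  have "(h' has_integral (h (2*pi) - h 0)) {0..2*pi}"
    by (rule fundamental_theorem_of_calculus)
      (auto intro!: has_field_derivative_at_within[OF hd]
         simp: has_real_derivative_iff_has_vector_derivative[symmetric])
  moreover have "h (2*pi) - h 0 = 0" unfolding h_def pol_def by simp
  ultimately have hint: "(h' has_integral 0) {0..2*pi}" by simp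
  have fxeq: "fx r0 t = r0 * pol (laplacian f) r0 t - h' t" for t
  proof -
    have "pol (laplacian f) r0 t = pol (px P) r0 t + pol (py Q) r0 t"
      unfolding pol_def laplacian_def P_def Q_def by simp
    then show ?thesis unfolding fx_def h'_def
      by (simp only:) (rule alg[OF sin_cos_squared_add])
  qed
  have lapint: "pol (laplacian f) r0 integrable_on {0..2*pi}"
  proof -
    have "continuous_on {0..2*pi} (\<lambda>t. pol (px P) r0 t + pol (py Q) r0 t)"
      by (intro continuous_intros pol_cont_t cPx cQy)
    moreover have "(\<lambda>t. pol (px P) r0 t + pol (py Q) r0 t) = pol (laplacian f) r0"
      unfolding pol_def laplacian_def P_def Q_def by auto
    ultimately show ?thesis using integrable_continuous_interval by metis
  qed
  have "integral {0..2*pi} (fx r0) = integral {0..2*pi} (\<lambda>t. r0 * pol (laplacian f) r0 t - h' t)"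
    using fxeq by (metis ext)
  also have "\<dots> = r0 * Av (laplacian f) r0 - 0"
    unfolding Av_def using lapint hint
    by (subst integral_diff) (auto simp: integral_unique has_integral_integrable integrable_on_mult_right)
  finally have "integral {0..2*pi} (fx r0) = r0 * Av (laplacian f) r0" by simp
  with d1 show ?thesis unfolding cbox_interval eq1[abs_def] by simp
qed


lemma Ck_Suc_mono: "Ck (Suc k) f \<Longrightarrow> Ck k f"
proof (induction k arbitrary: f)
  case 0 then show ?case by simp
next
  case (Suc k)
  from Suc.prems have "continuous_on UNIV f \<and>
      (\<forall>z. (\<lambda>t. f (t, snd z)) differentiable (at (fst z)) \<and>
           (\<lambda>t. f (fst z, t)) differentiable (at (snd z))) \<and>
      Ck (Suc k) (px f) \<and> Ck (Suc k) (py f)" by (rule iffD1[OF Ck.simps(2)])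
  then show ?case using Suc.IH[of "px f"] Suc.IH[of "py f"] by (intro iffD2[OF Ck.simps(2)]) blast
qed

lemma px_add:
  assumes "\<forall>z. (\<lambda>t. f (t, snd z)) differentiable (at (fst z))"
      "\<forall>z. (\<lambda>t. g (t, snd z)) differentiable (at (fst z))"
  shows "px (\<lambda>z. f z + g z) = (\<lambda>z. px f z + px g z)"
proof
  fix z
  have "((\<lambda>t. f (t, snd z) + g (t, snd z)) has_real_derivative px f z + px g z) (at (fst z))"
    using assms unfolding px_def
    by (intro DERIV_add) (auto simp: DERIV_deriv_iff_real_differentiable)
  then show "px (\<lambda>z. f z + g z) z = px f z + px g z"
    unfolding px_def[of "\<lambda>z. f z + g z"] by (rule DERIV_imp_deriv)
qed

lemma py_add:
  assumes "\<forall>z. (\<lambda>t. f (fst z, t)) differentiable (at (snd z))"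
      "\<forall>z. (\<lambda>t. g (fst z, t)) differentiable (at (snd z))"
  shows "py (\<lambda>z. f z + g z) = (\<lambda>z. py f z + py g z)"
proof
  fix z
  have "((\<lambda>t. f (fst z, t) + g (fst z, t)) has_real_derivative py f z + py g z) (at (snd z))"
    using assms unfolding py_def
    by (intro DERIV_add) (auto simp: DERIV_deriv_iff_real_differentiable)
  then show "py (\<lambda>z. f z + g z) z = py f z + py g z"
    unfolding py_def[of "\<lambda>z. f z + g z"] by (rule DERIV_imp_deriv)
qed

lemma Ck_add: "Ck k f \<Longrightarrow> Ck k g \<Longrightarrow> Ck k (\<lambda>z. f z + g z)"
proof (induction k arbitrary: f g)
  case 0 then show ?case by (auto intro: continuous_on_add)
next
  case (Suc k)
  from Suc.prems have px: "px (\<lambda>z. f z + g z) = (\<lambda>z. px f z + px g z)"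
    and py: "py (\<lambda>z. f z + g z) = (\<lambda>z. py f z + py g z)"
    by (auto intro!: px_add py_add)
  from Suc.prems Suc.IH have A: "Ck k (\<lambda>z. px f z + px g z)" "Ck k (\<lambda>z. py f z + py g z)"
    by simp_all
  from Suc.prems have B: "continuous_on UNIV (\<lambda>z. f z + g z)"
    by (simp add: continuous_on_add)
  from Suc.prems have C: "\<forall>z. (\<lambda>t. f (t, snd z) + g (t, snd z)) differentiable (at (fst z)) \<and>
           (\<lambda>t. f (fst z, t) + g (fst z, t)) differentiable (at (snd z))"
    by (simp add: differentiable_add)
  show ?case unfolding Ck.simps px py using A B C by blast
qed

lemma Ck2_facts:
  assumes "Ck 2 f"
  shows "continuous_on UNIV f" "\<forall>z. (\<lambda>t. f (t, snd z)) differentiable (at (fst z)) \<and>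
           (\<lambda>t. f (fst z, t)) differentiable (at (snd z))"
    "continuous_on UNIV (px f)" "continuous_on UNIV (py f)"
  using assms by (simp_all add: numeral_2_eq_2)

lemma Av_nonneg: "(\<And>z. f z \<ge> 0) \<Longrightarrow> continuous_on UNIV f \<Longrightarrow> Av f r \<ge> 0"
  unfolding Av_def
  by (rule integral_nonneg) (auto intro: integrable_continuous_interval pol_cont_t simp: pol_def)

lemma Av_pos: assumes "\<And>z. f z > 0" "continuous_on UNIV f" shows "Av f r > 0"
proof -
  have c: "continuous_on {0..2*pi} (pol f r)" by (rule pol_cont_t[OF assms(2)])
  obtain t0 where t0: "t0 \<in> {0..2*pi}" "\<And>t. t \<in> {0..2*pi} \<Longrightarrow> pol f r t0 \<le> pol f r t"
    using continuous_attains_inf[OF compact_Icc _ c] by fastforce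
  define m where "m = pol f r t0"
  have m: "m > 0" unfolding m_def pol_def using assms(1) by simp
  have "integral {0..2*pi} (\<lambda>t. m) \<le> integral {0..2*pi} (pol f r)"
    by (rule integral_le) (use t0 c in \<open>auto simp: m_def intro: integrable_continuous_interval\<close>)
  moreover have "integral {0..2*pi} (\<lambda>t. m) = 2*pi*m" by simp
  ultimately show ?thesis unfolding Av_def using m by (smt (verit) mult_pos_pos pi_gt_zero)
qed


lemma decr_from_deriv:
  fixes f f' :: "real \<Rightarrow> real"
  assumes "a \<le> b" "\<And>x. a \<le> x \<Longrightarrow> x \<le> b \<Longrightarrow> (f has_real_derivative f' x) (at x)"
    "\<And>x. a \<le> x \<Longrightarrow> x \<le> b \<Longrightarrow> f' x \<le> 0"
  shows "f b \<le> f a"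
  using DERIV_nonpos_imp_nonincreasing[of a b f] assms by blast

theorem theorem1p2:
  fixes q :: real
  assumes "q > 0"
  shows "\<not> (\<exists>u :: real \<times> real \<Rightarrow> real. Ck 4 u \<and> (\<forall>z. u z > 0) \<and>
            (\<forall>z. laplacian (laplacian u) z + u z powr (- q) = 0))"
proof
  assume "\<exists>u :: real \<times> real \<Rightarrow> real. Ck 4 u \<and> (\<forall>z. u z > 0) \<and>
            (\<forall>z. laplacian (laplacian u) z + u z powr (- q) = 0)"
  then obtain u :: "real \<times> real \<Rightarrow> real" where Ck4: "Ck 4 u" and pos: "\<And>z. u z > 0"
    and eq: "\<And>z. laplacian (laplacian u) z + u z powr (- q) = 0" by blast
  define w where "w = laplacian u"
  have e4: "Suc 3 = (4::nat)" and e3: "Suc 2 = (3::nat)" by simp_all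
  have C3: "Ck 3 (px u)" "Ck 3 (py u)" using Ck.simps(2)[of 3 u, unfolded e4] Ck4 by blast+
  have "Ck 2 (px (px u))" using Ck.simps(2)[of 2 "px u", unfolded e3] C3 by blast
  moreover have "Ck 2 (py (py u))" using Ck.simps(2)[of 2 "py u", unfolded e3] C3 by blast
  ultimately
  have Cw: "Ck 2 w" unfolding w_def laplacian_def[abs_def] by (rule Ck_add)
  have Cu: "Ck 2 u" using Ck_Suc_mono[of 2 u, unfolded e3] Ck_Suc_mono[of 3 u, unfolded e4] Ck4 by blast
  define G where "G = (\<lambda>z. u z powr (- q))"
  have Gpos: "G z > 0" for z unfolding G_def using pos[of z] by simp
  have cu: "continuous_on UNIV u" using Ck2_facts(1)[OF Cu] .
  have cG: "continuous_on UNIV G" unfolding G_def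
    using pos by (auto intro!: continuous_intros cu simp: less_imp_neq[symmetric])
  have lapw: "laplacian w = (\<lambda>z. - G z)" unfolding w_def G_def using eq
    by (auto simp: algebra_simps eq_neg_iff_add_eq_0)
  have AvG: "Av (laplacian w) r = - Av G r" for r
    unfolding lapw Av_def pol_def by (simp add: integral_neg)
  have dU: "(Av u has_real_derivative Mv u r) (at r)" for r
    using Av_deriv[OF Ck2_facts(2,1,3,4)[OF Cu]] .
  have dW: "(Av w has_real_derivative Mv w r) (at r)" for r
    using Av_deriv[OF Ck2_facts(2,1,3,4)[OF Cw]] .
  have dpsi: "((\<lambda>r. r * Mv u r) has_real_derivative r * Av w r) (at r)" for r
    using rMv_deriv[OF Cu] unfolding w_def .
  have dphi: "((\<lambda>r. r * Mv w r) has_real_derivative - (r * Av G r)) (at r)" for r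
    using rMv_deriv[OF Cw, of r] unfolding AvG by simp
  have AvGpos: "Av G r > 0" for r using Av_pos[OF Gpos cG] .
  define phi where "phi = (\<lambda>r. r * Mv w r)"
  have a1: "phi (1/2) \<le> phi 0"
    by (rule decr_from_deriv[OF _ dphi[unfolded phi_def[symmetric]]])
       (use AvGpos in \<open>auto intro: less_imp_le mult_nonneg_nonneg\<close>)
  have dphi': "DERIV phi x :> - (x * Av G x)" for x using dphi[unfolded phi_def[symmetric]] .
  have neg: "- (x * Av G x) < 0" if "x > 0" for x using AvGpos[of x] that by simp
  have a2: "phi 1 < phi (1/2)"
  proof (rule DERIV_neg_imp_decreasing[of "1/2" 1 phi])
    show "\<exists>y. DERIV phi x :> y \<and> y < 0" if "1/2 \<le> x" "x \<le> 1" for x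
      using dphi'[of x] neg[of x] that by (intro exI[of _ "- (x * Av G x)"]) auto
  qed simp
  define c where "c = - phi 1"
  have c: "c > 0" using a1 a2 unfolding c_def phi_def by simp
  have b: "phi r \<le> - c" if "r \<ge> 1" for r
  proof -
    have "phi r \<le> phi 1"
      by (rule decr_from_deriv[OF that dphi']) (use neg in \<open>auto intro: less_imp_le\<close>)
    then show ?thesis unfolding c_def by simp
  qed
  have cc: "Av w r + c * ln r \<le> Av w 1" if "r \<ge> 1" for r
  proof -
    have "Av w r + c * ln r \<le> Av w 1 + c * ln 1"
    proof (rule decr_from_deriv[where f="\<lambda>x. Av w x + c * ln x" and f'="\<lambda>x. Mv w x + c * (1/x)"])
      show "((\<lambda>x. Av w x + c * ln x) has_real_derivative Mv w x + c * (1 / x)) (at x)" if "1 \<le> x" for x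
        using that by (auto intro!: derivative_eq_intros dW)
      show "Mv w x + c * (1 / x) \<le> 0" if "1 \<le> x" "x \<le> r" for x
      proof -
        have "x * Mv w x \<le> - c" using b[OF that(1)] unfolding phi_def .
        moreover have "Mv w x + c * (1 / x) = (x * Mv w x + c) / x" using that by (simp add: field_simps)
        ultimately show ?thesis using that by (simp add: divide_nonpos_pos)
      qed
    qed (use that in auto)
    then show ?thesis by simp
  qed
  define R0 where "R0 = max 1 (exp ((Av w 1 + 1) / c))"
  have d: "Av w r \<le> -1" if "r \<ge> R0" for r
  proof -
    have r1: "r \<ge> 1" and re: "r \<ge> exp ((Av w 1 + 1) / c)" using that unfolding R0_def by auto
    then have "ln r \<ge> (Av w 1 + 1) / c" using re r1 ln_le_cancel_iff[of "exp ((Av w 1 + 1) / c)" r] by simp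
    then have "c * ln r \<ge> Av w 1 + 1" using c by (simp add: field_simps)
    then show ?thesis using cc[OF r1] by simp
  qed
  have R0: "R0 \<ge> 1" unfolding R0_def by simp
  define psi where "psi = (\<lambda>r. r * Mv u r)"
  have dpsi': "DERIV psi x :> x * Av w x" for x using dpsi[of x] unfolding psi_def .
  define K where "K = psi R0 + R0^2/2"
  have e: "psi r \<le> K - r^2/2" if "r \<ge> R0" for r
  proof -
    have "psi r + r^2/2 \<le> psi R0 + R0^2/2"
    proof (rule decr_from_deriv[where f="\<lambda>x. psi x + x^2/2" and f'="\<lambda>x. x * Av w x + x"])
      show "((\<lambda>x. psi x + x^2/2) has_real_derivative x * Av w x + x) (at x)" for x
        by (auto intro!: derivative_eq_intros dpsi')
      show "x * Av w x + x \<le> 0" if "R0 \<le> x" "x \<le> r" for x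
      proof -
        have "x * Av w x \<le> x * (-1)" using d[OF that(1)] that R0 by (intro mult_left_mono) auto
        then show ?thesis by simp
      qed
    qed (use that in auto)
    then show ?thesis unfolding K_def by simp
  qed
  define R1 where "R1 = max R0 (\<bar>K\<bar> + 2)"
  have f: "Mv u r \<le> -1" if "r \<ge> R1" for r
  proof -
    have r0: "r \<ge> R0" and r2: "r \<ge> \<bar>K\<bar> + 2" using that unfolding R1_def by auto
    have "r^2/2 - r \<ge> K"
    proof -
      have "r * (r - 2) \<ge> (\<bar>K\<bar> + 2) * \<bar>K\<bar>" using r2 by (intro mult_mono) auto
      moreover have "(\<bar>K\<bar> + 2) * \<bar>K\<bar> \<ge> 2 * \<bar>K\<bar>" by (simp add: algebra_simps)
      moreover have "r^2/2 - r = r*(r-2)/2" by (simp add: power2_eq_square field_simps)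
      moreover have "\<bar>K\<bar> \<ge> K" by simp
      ultimately show ?thesis by linarith
    qed
    then have "r * Mv u r \<le> r * (-1)" using e[OF r0] unfolding psi_def by simp
    moreover have "r > 0" using r0 R0 by simp
    ultimately show ?thesis by (metis mult_le_cancel_left_pos)
  qed
  define r where "r = R1 + \<bar>Av u R1\<bar> + 1"
  have "Av u r + r \<le> Av u R1 + R1"
  proof (rule decr_from_deriv[where f="\<lambda>x. Av u x + x" and f'="\<lambda>x. Mv u x + 1"])
    show "((\<lambda>x. Av u x + x) has_real_derivative Mv u x + 1) (at x)" for x
      by (auto intro!: derivative_eq_intros dU)
    show "Mv u x + 1 \<le> 0" if "R1 \<le> x" for x using f[OF that] by simp
  qed (auto simp: r_def)
  then have "Av u r < 0" unfolding r_def by linarith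
  moreover have "Av u r \<ge> 0" by (rule Av_nonneg) (use pos cu in \<open>auto intro: less_imp_le\<close>)
  ultimately show False by simp
qed

end
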